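(* Let $h$ be a hospital and $k_h=\lceil B_h/\underline{w}_h\rceil$. Define $\mathrm{Ch}_h:2^{X_h}\to2^{X_h}$ by: given $X'\subseteq X_h$, sort $X'$ in non-increasing order of utility per unit wage $f_h(x)/x_W$ (ties broken by a fixed order) and return the first $\min\{k_h,|X'|\}$ contracts. Then $\mathrm{Ch}_h$ satisfies SUB, IRC, LAD and COM.
   Context: Hospital $h$ has a finite set $X_h$ of contracts $x=(d,h,w)$ with wages $x_W=w$, $0<x_W\le B_h$, where $B_h>0$ is its budget; distinct contracts in $X_h$ may involve the same doctor. Its utility is additive: $f_h(x)>0$ and $f_h(Y)=\sum_{x\in Y}f_h(x)$. $w_h(Y)=\sum_{x\in Y}x_W$ for $Y\subseteq X_h$, $\underline{w}_h=\min_{x\in X_h}x_W$. For a map $\mathrm{Ch}_h:2^{X_h}\to2^{X_h}$ with $\mathrm{Ch}_h(Y)\subseteq Y$: SUB means for all $Y''\subseteq Y'\subseteq X_h$, $Y''\setminus\mathrm{Ch}_h(Y'')\subseteq Y'\setminus\mathrm{Ch}_h(Y')$; IRC means for $Y'\subseteq X_h$, $Y''\subseteq X_h\setminus Y'$, if $\mathrm{Ch}_h(Y'\cup Y'')\subseteq Y'$ then $\mathrm{Ch}_h(Y')=\mathrm{Ch}_h(Y'\cup Y'')$; LAD means for all $Y''\subseteq Y'\subseteq X_h$, $|\mathrm{Ch}_h(Y'')|\le|\mathrm{Ch}_h(Y')|$; COM means for all $Y''\subseteq Y'\subseteq X_h$ with $w_h(Y'')\le\max\{B_h,w_h(\mathrm{Ch}_h(Y'))\}$,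 $f_h(\mathrm{Ch}_h(Y'))\ge f_h(Y'')$. *)

theory Defs
  imports Complex_Main
begin

text \<open>Contracts of hospital h are elements of an abstract type 'c; X is the finite
  set X_h, wage x gives x_W, f gives the utility of a single contract, B is the budget.\<close>

definition SUB :: "'c set \<Rightarrow> ('c set \<Rightarrow> 'c set) \<Rightarrow> bool" where
  "SUB X Ch \<longleftrightarrow> (\<forall>Y' Y''. Y'' \<subseteq> Y' \<and> Y' \<subseteq> X \<longrightarrow> Y'' - Ch Y'' \<subseteq> Y' - Ch Y')"

definition IRC :: "'c set \<Rightarrow> ('c set \<Rightarrow> 'c set) \<Rightarrow> bool" where
  "IRC X Ch \<longleftrightarrow> (\<forall>Y' Y''. Y' \<subseteq> X \<and> Y'' \<subseteq> X - Y' \<and> Ch (Y' \<union> Y'') \<subseteq> Y'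
      \<longrightarrow> Ch Y' = Ch (Y' \<union> Y''))"

definition LAD :: "'c set \<Rightarrow> ('c set \<Rightarrow> 'c set) \<Rightarrow> bool" where
  "LAD X Ch \<longleftrightarrow> (\<forall>Y' Y''. Y'' \<subseteq> Y' \<and> Y' \<subseteq> X \<longrightarrow> card (Ch Y'') \<le> card (Ch Y'))"

definition COM :: "'c set \<Rightarrow> ('c \<Rightarrow> real) \<Rightarrow> ('c \<Rightarrow> real) \<Rightarrow> real \<Rightarrow> ('c set \<Rightarrow> 'c set) \<Rightarrow> bool" where
  "COM X wage f B Ch \<longleftrightarrow> (\<forall>Y' Y''. Y'' \<subseteq> Y' \<and> Y' \<subseteq> X \<and>
      sum wage Y'' \<le> max B (sum wage (Ch Y')) \<longrightarrow> sum f (Ch Y') \<ge> sum f Y'')"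

definition kh :: "'c set \<Rightarrow> ('c \<Rightarrow> real) \<Rightarrow> real \<Rightarrow> nat" where
  "kh X wage B = nat \<lceil>B / Min (wage ` X)\<rceil>"

definition before :: "('c \<Rightarrow> real) \<Rightarrow> ('c \<Rightarrow> real) \<Rightarrow> ('c \<Rightarrow> 'c \<Rightarrow> bool) \<Rightarrow> 'c \<Rightarrow> 'c \<Rightarrow> bool" where
  "before wage f tb x y \<longleftrightarrow> f x / wage x > f y / wage y \<or> (f x / wage x = f y / wage y \<and> tb x y)"

text \<open>Greedy choice: after sorting X' by the order above, the first min{k, |X'|} contracts are
  exactly those with fewer than k predecessors in X'.\<close>
definition greedy_ch :: "nat \<Rightarrow> ('c \<Rightarrow> real) \<Rightarrow> ('c \<Rightarrow> real) \<Rightarrow> ('c \<Rightarrow> 'c \<Rightarrow> bool) \<Rightarrow> 'c set \<Rightarrow> 'c set" where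
  "greedy_ch k wage f tb X' = {x \<in> X'. card {y \<in> X'. before wage f tb y x} < k}"

end

theory Submission
  imports Defs
begin

definition sto :: "'c set \<Rightarrow> ('c \<Rightarrow> 'c \<Rightarrow> bool) \<Rightarrow> bool" where
  "sto X R \<longleftrightarrow> (\<forall>x\<in>X. \<not> R x x) \<and> (\<forall>x\<in>X. \<forall>y\<in>X. \<forall>z\<in>X. R x y \<longrightarrow> R y z \<longrightarrow> R x z)
     \<and> (\<forall>x\<in>X. \<forall>y\<in>X. x \<noteq> y \<longrightarrow> R x y \<or> R y x)"

lemma pred_less:
  assumes "sto X R" "finite Y" "Y \<subseteq> X" "x \<in> Y" "y \<in> Y" "R x y"
  shows "card {z\<in>Y. R z x} < card {z\<in>Y. R z y}"
proof (rule psubset_card_mono)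
  show "finite {z\<in>Y. R z y}" using assms by auto
  have "{z\<in>Y. R z x} \<subseteq> {z\<in>Y. R z y}" using assms unfolding sto_def by blast
  moreover have "x \<in> {z\<in>Y. R z y}" "x \<notin> {z\<in>Y. R z x}" using assms unfolding sto_def by auto
  ultimately show "{z\<in>Y. R z x} \<subset> {z\<in>Y. R z y}" by blast
qed

lemma card_top:
  assumes "sto X R" "finite Y" "Y \<subseteq> X"
  shows "card {x\<in>Y. card {y\<in>Y. R y x} < k} = min k (card Y)"
proof -
  define g where "g x = card {y\<in>Y. R y x}" for x
  have inj: "inj_on g Y"
  proof (rule inj_onI)
    fix x y assume xy: "x \<in> Y" "y \<in> Y" "g x = g y"
    show "x = y"
    proof (rule ccontr)
      assume "x \<noteq> y"
      then have "R x y \<or> R y x" using assms xy unfolding sto_def by blast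
      then show False using pred_less[OF assms(1,2,3)] xy unfolding g_def
        by (metis less_irrefl)
    qed
  qed
  have sub: "g ` Y \<subseteq> {..<card Y}"
  proof
    fix u assume "u \<in> g ` Y"
    then obtain x where x: "x \<in> Y" "u = g x" by auto
    have "{y\<in>Y. R y x} \<subseteq> Y - {x}" using assms x unfolding sto_def by auto
    then have "g x \<le> card (Y - {x})" unfolding g_def using assms by (intro card_mono) auto
    also have "\<dots> < card Y" using x assms by (intro card_Diff1_less) auto
    finally show "u \<in> {..<card Y}" using x by simp
  qed
  have "card (g ` Y) = card {..<card Y}" using card_image[OF inj] by simp
  then have img: "g ` Y = {..<card Y}" using sub by (intro card_subset_eq) auto
  have "{x\<in>Y. g x < k} = {x\<in>Y. g x \<in> {..<k}}" by auto
  have "card {x\<in>Y. g x < k} = card (g ` {x\<in>Y. g x < k})"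
    by (rule card_image[symmetric]) (rule inj_on_subset[OF inj], auto)
  also have "g ` {x\<in>Y. g x < k} = g ` Y \<inter> {..<k}" by auto
  also have "\<dots> = {..<min k (card Y)}" using img by auto
  finally show ?thesis unfolding g_def by simp
qed

lemma chosen_before:
  assumes "sto X R" "finite Y" "Y \<subseteq> X" "c \<in> Y" "y \<in> Y"
    "card {z\<in>Y. R z c} < k" "\<not> card {z\<in>Y. R z y} < k"
  shows "R c y"
proof -
  have "c \<noteq> y" using assms by auto
  then have "R c y \<or> R y c" using assms unfolding sto_def by blast
  moreover have "\<not> R y c"
  proof
    assume "R y c"
    then have "card {z\<in>Y. R z y} < card {z\<in>Y. R z c}" using pred_less[OF assms(1,2,3)] assms by blast
    then show False using assms by linarith
  qed
  ultimately show ?thesis by blast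
qed

theorem lemma1:
  fixes X :: "'c set" and wage f :: "'c \<Rightarrow> real" and B :: real
    and tb :: "'c \<Rightarrow> 'c \<Rightarrow> bool"
  assumes fin: "finite X"
    and B_pos: "B > 0"
    and wage_pos: "\<And>x. x \<in> X \<Longrightarrow> 0 < wage x"
    and wage_le: "\<And>x. x \<in> X \<Longrightarrow> wage x \<le> B"
    and f_pos: "\<And>x. x \<in> X \<Longrightarrow> 0 < f x"
    and tb_irrefl: "\<And>x. x \<in> X \<Longrightarrow> \<not> tb x x"
    and tb_trans: "\<And>x y z. x \<in> X \<Longrightarrow> y \<in> X \<Longrightarrow> z \<in> X \<Longrightarrow> tb x y \<Longrightarrow> tb y z \<Longrightarrow> tb x z"
    and tb_total: "\<And>x y. x \<in> X \<Longrightarrow> y \<in> X \<Longrightarrow> x \<noteq> y \<Longrightarrow> tb x y \<or> tb y x"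
  defines "Ch \<equiv> greedy_ch (kh X wage B) wage f tb"
  shows "SUB X Ch \<and> IRC X Ch \<and> LAD X Ch \<and> COM X wage f B Ch"
proof -
  define R where "R = before wage f tb"
  define k where "k = kh X wage B"
  have sto: "sto X R" unfolding sto_def R_def before_def
    using tb_irrefl tb_trans tb_total by (smt (verit))
  have ChY: "Ch Y = {x\<in>Y. card {y\<in>Y. R y x} < k}" for Y
    unfolding Ch_def greedy_ch_def R_def k_def by simp
  have finY: "finite Y" if "Y \<subseteq> X" for Y using fin that finite_subset by blast
  have cardCh: "card (Ch Y) = min k (card Y)" if "Y \<subseteq> X" for Y
    unfolding ChY using card_top[OF sto finY[OF that] that] .
  have SUB: "SUB X Ch" unfolding SUB_def
  proof (intro allI impI subsetI)
    fix Y' Y'' x assume A: "Y'' \<subseteq> Y' \<and> Y' \<subseteq> X" and x: "x \<in> Y'' - Ch Y''"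
    have "card {y\<in>Y''. R y x} \<le> card {y\<in>Y'. R y x}"
      using A finY by (intro card_mono) auto
    then show "x \<in> Y' - Ch Y'" using x A unfolding ChY by auto
  qed
  have LAD: "LAD X Ch" unfolding LAD_def
  proof (intro allI impI)
    fix Y' Y'' :: "'c set" assume A: "Y'' \<subseteq> Y' \<and> Y' \<subseteq> X"
    have "card Y'' \<le> card Y'" using A finY by (intro card_mono) auto
    then show "card (Ch Y'') \<le> card (Ch Y')" using A cardCh by auto
  qed
  have IRC: "IRC X Ch" unfolding IRC_def
  proof (intro allI impI)
    fix Y' Y'' assume A: "Y' \<subseteq> X \<and> Y'' \<subseteq> X - Y' \<and> Ch (Y' \<union> Y'') \<subseteq> Y'"
    define U where "U = Y' \<union> Y''"
    have U: "U \<subseteq> X" "finite U" using A finY unfolding U_def by auto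
    show "Ch Y' = Ch (Y' \<union> Y'')"
    proof
      show "Ch (Y' \<union> Y'') \<subseteq> Ch Y'"
      proof
        fix x assume x: "x \<in> Ch (Y' \<union> Y'')"
        then have xY: "x \<in> Y'" using A by auto
        have "card {y\<in>Y'. R y x} \<le> card {y\<in>Y' \<union> Y''. R y x}"
          using U unfolding U_def by (intro card_mono) auto
        then show "x \<in> Ch Y'" using x xY unfolding ChY by auto
      qed
    next
      show "Ch Y' \<subseteq> Ch (Y' \<union> Y'')"
      proof
        fix x assume x: "x \<in> Ch Y'"
        show "x \<in> Ch (Y' \<union> Y'')"
        proof (rule ccontr)
          assume nx: "x \<notin> Ch (Y' \<union> Y'')"
          have xY: "x \<in> Y'" using x unfolding ChY by auto
          have nk: "\<not> card {y\<in>U. R y x} < k" using nx xY unfolding ChY U_def by auto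
          have "card {y\<in>U. R y x} < card U"
          proof -
            have "{y\<in>U. R y x} \<subseteq> U - {x}" using sto U xY unfolding sto_def U_def by auto
            then have "card {y\<in>U. R y x} \<le> card (U - {x})" using U by (intro card_mono) auto
            also have "\<dots> < card U" using U xY unfolding U_def by (intro card_Diff1_less) auto
            finally show ?thesis .
          qed
          then have ck: "card (Ch U) = k" using cardCh[OF U(1)] nk by simp
          have "Ch U \<subseteq> {y\<in>Y'. R y x}"
          proof
            fix c assume c: "c \<in> Ch U"
            then have "c \<in> Y'" using A unfolding U_def by auto
            moreover have "R c x"
              using chosen_before[OF sto U(2) U(1), of c x k] c xY nk unfolding ChY U_def by auto
            ultimately show "c \<in> {y\<in>Y'. R y x}" by auto
          qed
          then have "k \<le> card {y\<in>Y'. R y x}" using ck finY A by (metis (no_types, lifting) card_mono finite_subset mem_Collect_eq subsetI)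
          then show False using x unfolding ChY by auto
        qed
      qed
    qed
  qed
  have COM: "COM X wage f B Ch" unfolding COM_def
  proof (intro allI impI)
    fix Y' Y'' assume A: "Y'' \<subseteq> Y' \<and> Y' \<subseteq> X \<and> sum wage Y'' \<le> max B (sum wage (Ch Y'))"
    have fY': "finite Y'" using A finY by auto
    have ChS: "Ch Y' \<subseteq> Y'" unfolding ChY by auto
    show "sum f Y'' \<le> sum f (Ch Y')"
    proof (cases "Ch Y' = Y'")
      case True
      have "sum f Y'' \<le> sum f Y'" using A fY' f_pos
        by (intro sum_mono2) (auto intro: less_imp_le)
      then show ?thesis using True by simp
    next
      case False
      then obtain y0 where y0: "y0 \<in> Y'" "y0 \<notin> Ch Y'" using ChS by auto
      have "card (Ch Y') < card Y'" by (rule psubset_card_mono[OF fY']) (use ChS False in blast)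
      then have ck: "card (Ch Y') = k" using cardCh A by auto
      have Xne: "X \<noteq> {}" using y0 A by auto
      define m where "m = Min (wage ` X)"
      have mpos: "m > 0" unfolding m_def using fin Xne wage_pos by auto
      have mle: "m \<le> wage x" if "x \<in> X" for x unfolding m_def using fin that by auto
      have "B / m \<le> of_int \<lceil>B/m\<rceil>" by (rule le_of_int_ceiling)
      also have "\<dots> \<le> real (nat \<lceil>B/m\<rceil>)" by simp
      also have "\<dots> = real k" unfolding k_def kh_def m_def by simp
      finally have "B / m \<le> real k" .
      then have Bk: "B \<le> real k * m" using mpos by (simp add: field_simps)
      have "real k * m = (\<Sum>c\<in>Ch Y'. m)" using ck by simp
      also have "\<dots> \<le> sum wage (Ch Y')" using ChS A mle by (intro sum_mono) auto
      finally have wY: "sum wage Y'' \<le> sum wage (Ch Y')" using A Bk by linarith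
      define rr where "rr y = f y / wage y" for y
      define r where "r = Max (rr ` (Y' - Ch Y'))"
      have rpos: "r \<ge> 0"
      proof -
        have "rr y0 \<le> r" unfolding r_def using fY' y0 by auto
        moreover have "rr y0 > 0" unfolding rr_def using y0 A f_pos wage_pos by auto
        ultimately show ?thesis by linarith
      qed
      have up: "f y \<le> r * wage y" if "y \<in> Y' - Ch Y'" for y
      proof -
        have "rr y \<le> r" unfolding r_def using fY' that by auto
        moreover have "wage y > 0" using that A wage_pos by auto
        ultimately show ?thesis unfolding rr_def by (simp add: field_simps)
      qed
      have low: "r * wage c \<le> f c" if c: "c \<in> Ch Y'" for c
      proof -
        have "r \<in> rr ` (Y' - Ch Y')" unfolding r_def using fY' y0 by (intro Max_in) auto
        then obtain y where y: "y \<in> Y'" "y \<notin> Ch Y'" "r = rr y" by auto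
        have "R c y" using chosen_before[OF sto fY', of c y k] A c y ChS unfolding ChY by auto
        then have "rr y \<le> rr c" unfolding R_def before_def rr_def by auto
        moreover have "wage c > 0" using c ChS A wage_pos by auto
        ultimately show ?thesis using y unfolding rr_def by (simp add: field_simps)
      qed
      have fY'': "finite Y''" using A fY' finite_subset by blast
      have fC: "finite (Ch Y')" using ChS fY' finite_subset by blast
      have s1: "sum f Y'' = sum f (Y'' \<inter> Ch Y') + sum f (Y'' - Ch Y')"
        using fY'' by (metis sum.Int_Diff)
      have s2: "sum wage Y'' = sum wage (Y'' \<inter> Ch Y') + sum wage (Y'' - Ch Y')"
        using fY'' by (metis sum.Int_Diff)
      have s3: "sum wage (Ch Y') = sum wage (Y'' \<inter> Ch Y') + sum wage (Ch Y' - Y'')"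
        using fC by (metis inf_commute sum.Int_Diff)
      have s4: "sum f (Ch Y') = sum f (Y'' \<inter> Ch Y') + sum f (Ch Y' - Y'')"
        using fC by (metis inf_commute sum.Int_Diff)
      have "sum f (Y'' - Ch Y') \<le> (\<Sum>y\<in>Y'' - Ch Y'. r * wage y)"
        using A up by (intro sum_mono) auto
      also have "\<dots> = r * sum wage (Y'' - Ch Y')" by (simp add: sum_distrib_left)
      also have "\<dots> \<le> r * sum wage (Ch Y' - Y'')"
        using wY s2 s3 rpos by (intro mult_left_mono) auto
      also have "\<dots> = (\<Sum>c\<in>Ch Y' - Y''. r * wage c)" by (simp add: sum_distrib_left)
      also have "\<dots> \<le> sum f (Ch Y' - Y'')" using low by (intro sum_mono) auto
      finally show ?thesis using s1 s4 by linarith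
    qed
  qed
  show ?thesis using SUB IRC LAD COM by blast
qed

end
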